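(* No randomized strategyproof mechanism for locating an obnoxious facility on $[0,1]$ has an approximation ratio better than $(5/4)^{1/p}$ for the $L_p$ social cost, for any $1\le p<\infty$. No randomized strategyproof mechanism has an approximation ratio better than $1.008$ for the $L_\infty$ social cost.
   Context: Agents $i=1,\dots,n$ have private locations $x_i\in[0,1]$. A randomized mechanism maps each reported profile to a distribution over $[0,1]$; agent $i$'s cost from a distribution $\pi$ is $\mathbb E_{y\sim\pi}[1-|x_i-y|]$, and the mechanism is strategyproof if no agent can decrease its expected cost by misreporting, holding others' reports fixed. $L_p$ social cost: $\mathrm{sc}_p(y,\mathbf x)=(\sum_i(1-|x_i-y|)^p)^{1/p}$, $\mathrm{sc}_\infty(y,\mathbf x)=\max_i(1-|x_i-y|)$; the mechanism's value is $\mathbb E_{y\sim f(\mathbf x)}[\mathrm{sc}_p(y,\mathbf x)]$. Approximation ratio: supremum over all numbers of agents and profiles of the mechanism's value divided by $\min_{z\in[0,1]}\mathrm{sc}_p(z,\mathbf x)$. *)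

theory Defs
  imports "HOL-Probability.Probability"
begin

text \<open>A profile of reported locations is a list of reals (its length is the number of agents).
A randomized mechanism maps each profile in [0,1]^n to a probability measure on [0,1].\<close>

definition rand_mechanism :: "(real list \<Rightarrow> real measure) \<Rightarrow> bool" where
  "rand_mechanism f \<longleftrightarrow>
     (\<forall>xs. set xs \<subseteq> {0..1} \<longrightarrow>
        prob_space (f xs) \<and> sets (f xs) = sets (restrict_space borel {0..1::real}))"

definition agent_cost :: "real \<Rightarrow> real measure \<Rightarrow> real" where
  "agent_cost x M = (\<integral>y. 1 - \<bar>x - y\<bar> \<partial>M)"

definition strategyproof :: "(real list \<Rightarrow> real measure) \<Rightarrow> bool" where
  "strategyproof f \<longleftrightarrow>
     (\<forall>xs i x'. set xs \<subseteq> {0..1} \<longrightarrow> i < length xs \<longrightarrow> x' \<in> {0..1} \<longrightarrow>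
        agent_cost (xs ! i) (f xs) \<le> agent_cost (xs ! i) (f (xs[i := x'])))"

definition sc_p :: "real \<Rightarrow> real \<Rightarrow> real list \<Rightarrow> real" where
  "sc_p p y xs = (\<Sum>x\<leftarrow>xs. (1 - \<bar>x - y\<bar>) powr p) powr (1 / p)"

definition sc_inf :: "real \<Rightarrow> real list \<Rightarrow> real" where
  "sc_inf y xs = Max ((\<lambda>x. 1 - \<bar>x - y\<bar>) ` set xs)"

definition approx_within ::
  "(real \<Rightarrow> real list \<Rightarrow> real) \<Rightarrow> (real list \<Rightarrow> real measure) \<Rightarrow> real \<Rightarrow> bool" where
  "approx_within sc f \<rho> \<longleftrightarrow>
     (\<forall>xs. xs \<noteq> [] \<longrightarrow> set xs \<subseteq> {0..1} \<longrightarrow>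
        (\<integral>y. sc y xs \<partial>f xs) \<le> \<rho> * (INF z\<in>{0..1}. sc z xs))"

end

theory Submission
  imports Defs
begin

lemma space_eq:
  assumes "sets M = sets (restrict_space borel {0..1::real})"
  shows "space M = {0..1}"
  using sets_eq_imp_space_eq[OF assms] by (simp add: space_restrict_space)

lemma meas_M:
  assumes "sets M = sets (restrict_space borel {0..1::real})"
      and "g \<in> borel_measurable borel"
  shows "g \<in> borel_measurable M"
proof -
  have "g \<in> borel_measurable (restrict_space borel {0..1})"
    using assms(2) by (rule measurable_restrict_space1)
  then show ?thesis by (subst measurable_cong_sets[OF assms(1) refl])
qed

lemma int_bounded:
  assumes "prob_space M" "sets M = sets (restrict_space borel {0..1::real})"
    "g \<in> borel_measurable borel" "\<And>y. y \<in> {0..1} \<Longrightarrow> \<bar>g y\<bar> \<le> B"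
  shows "integrable M (g :: real \<Rightarrow> real)"
proof -
  interpret prob_space M by fact
  show ?thesis
  proof (rule integrable_const_bound[where B=B])
    show "AE x in M. norm (g x) \<le> B"
      using assms(4) space_eq[OF assms(2)] by (intro AE_I2) auto
    show "g \<in> borel_measurable M" using meas_M[OF assms(2,3)] .
  qed
qed

lemma int_const:
  assumes "prob_space M" shows "(\<integral>y. (k::real) \<partial>M) = k"
proof -
  interpret prob_space M by fact
  show ?thesis by (simp add: prob_space)
qed

lemma int_abs:
  assumes "prob_space M" "sets M = sets (restrict_space borel {0..1::real})" "x \<in> {0..1}"
  shows "integrable M (\<lambda>y. \<bar>x - y\<bar>)"
  by (rule int_bounded[OF assms(1,2), where B=1]) (use assms(3) in auto)

lemma int_id:
  assumes "prob_space M" "sets M = sets (restrict_space borel {0..1::real})"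
  shows "integrable M (\<lambda>y. y)"
  by (rule int_bounded[OF assms(1,2), where B=1]) auto

lemma int_le_const:
  assumes "prob_space M" "sets M = sets (restrict_space borel {0..1::real})"
    "integrable M g" "\<And>y. y \<in> {0..1} \<Longrightarrow> k \<le> g y"
  shows "(k::real) \<le> (\<integral>y. g y \<partial>M)"
proof -
  interpret prob_space M by fact
  have "(\<integral>y. k \<partial>M) \<le> (\<integral>y. g y \<partial>M)"
    by (rule integral_mono) (use assms space_eq[OF assms(2)] in auto)
  then show ?thesis by (simp add: prob_space)
qed

lemma int_ge_const:
  assumes "prob_space M" "sets M = sets (restrict_space borel {0..1::real})"
    "integrable M g" "\<And>y. y \<in> {0..1} \<Longrightarrow> g y \<le> k"
  shows "(\<integral>y. g y \<partial>M) \<le> (k::real)"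
proof -
  interpret prob_space M by fact
  have "(\<integral>y. g y \<partial>M) \<le> (\<integral>y. k \<partial>M)"
    by (rule integral_mono) (use assms space_eq[OF assms(2)] in auto)
  then show ?thesis by (simp add: prob_space)
qed

lemma agent_cost_eq:
  assumes "prob_space M" "sets M = sets (restrict_space borel {0..1::real})" "x \<in> {0..1}"
  shows "agent_cost x M = 1 - (\<integral>y. \<bar>x - y\<bar> \<partial>M)"
proof -
  interpret prob_space M by fact
  have "agent_cost x M = (\<integral>y. 1 \<partial>M) - (\<integral>y. \<bar>x - y\<bar> \<partial>M)"
    unfolding agent_cost_def
    using int_abs[OF assms] by (subst Bochner_Integration.integral_diff) auto
  then show ?thesis by (simp add: prob_space)
qed


lemma mech:
  assumes "rand_mechanism f" "set L \<subseteq> {0..1}"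
  shows "prob_space (f L)" "sets (f L) = sets (restrict_space borel {0..1::real})"
  using assms unfolding rand_mechanism_def by auto

lemma INF_facts:
  assumes "\<And>z. z \<in> {0..1} \<Longrightarrow> 0 \<le> g z" "w \<in> {0..1::real}"
  shows "(INF z\<in>{0..1}. g z) \<le> g w" "0 \<le> (INF z\<in>{0..1}. (g z::real))"
proof -
  have "bdd_below (g ` {0..1})" unfolding bdd_below_def using assms(1) by (intro exI[of _ 0]) auto
  then show "(INF z\<in>{0..1}. g z) \<le> g w" using assms(2) by (rule cINF_lower)
  show "0 \<le> (INF z\<in>{0..1}. g z)" using assms(1) by (intro cINF_greatest) auto
qed

lemma int_comb:
  fixes F G H :: "real \<Rightarrow> real"
  assumes "prob_space M" "sets M = sets (restrict_space borel {0..1::real})"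
    "integrable M F" "integrable M G" "integrable M H"
    "\<And>y. y \<in> {0..1} \<Longrightarrow> k \<le> F y + a * G y + b * H y"
  shows "k \<le> (\<integral>y. F y \<partial>M) + a * (\<integral>y. G y \<partial>M) + b * (\<integral>y. H y \<partial>M)"
proof -
  have "k \<le> (\<integral>y. F y + a * G y + b * H y \<partial>M)"
    by (rule int_le_const[OF assms(1,2)]) (use assms(3-6) in auto)
  also have "\<dots> = (\<integral>y. F y \<partial>M) + a * (\<integral>y. G y \<partial>M) + b * (\<integral>y. H y \<partial>M)"
    using assms(3-5) by simp
  finally show ?thesis .
qed

lemma int_comb_up:
  fixes F G H :: "real \<Rightarrow> real"
  assumes "prob_space M" "sets M = sets (restrict_space borel {0..1::real})"
    "integrable M F" "integrable M G" "integrable M H"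
    "\<And>y. y \<in> {0..1} \<Longrightarrow> F y + a * G y + b * H y \<le> k"
  shows "(\<integral>y. F y \<partial>M) + a * (\<integral>y. G y \<partial>M) + b * (\<integral>y. H y \<partial>M) \<le> k"
proof -
  have "(\<integral>y. F y + a * G y + b * H y \<partial>M) \<le> k"
    by (rule int_ge_const[OF assms(1,2)]) (use assms(3-6) in auto)
  also have "(\<integral>y. F y + a * G y + b * H y \<partial>M) = (\<integral>y. F y \<partial>M) + a * (\<integral>y. G y \<partial>M) + b * (\<integral>y. H y \<partial>M)"
    using assms(3-5) by simp
  finally show ?thesis .
qed

lemma sp_inst:
  assumes rm: "rand_mechanism f" and sp: "strategyproof f"
    and "set xs \<subseteq> {0..1}" "i < length xs" "x' \<in> {0..1}"
  shows "(\<integral>y. \<bar>xs ! i - y\<bar> \<partial>f (xs[i := x'])) \<le> (\<integral>y. \<bar>xs ! i - y\<bar> \<partial>f xs)"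
proof -
  have xi: "xs ! i \<in> {0..1}" using assms(3,4) nth_mem by blast
  have s2: "set (xs[i := x']) \<subseteq> {0..1}" using assms(3,5) set_update_subset_insert by fastforce
  have "agent_cost (xs ! i) (f xs) \<le> agent_cost (xs ! i) (f (xs[i := x']))"
    using sp assms(3-5) unfolding strategyproof_def by blast
  then show ?thesis
    using agent_cost_eq[OF mech[OF rm assms(3)] xi] agent_cost_eq[OF mech[OF rm s2] xi] by simp
qed

lemma core:
  fixes f :: "real list \<Rightarrow> real measure" and sc :: "real \<Rightarrow> real list \<Rightarrow> real" and c \<rho> :: real
  assumes rm: "rand_mechanism f" and sp: "strategyproof f" and ap: "approx_within sc f \<rho>"
    and c: "c \<ge> 5/11"
    and i00: "integrable (f [0,0]) (\<lambda>y. sc y [0,0])"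
    and i11: "integrable (f [1,1]) (\<lambda>y. sc y [1,1])"
    and iA: "integrable (f [0,5/8]) (\<lambda>y. sc y [0,5/8])"
    and iC: "integrable (f [3/8,1]) (\<lambda>y. sc y [3/8,1])"
    and h00: "\<And>y. y \<in> {0..1} \<Longrightarrow> sc y [0,0] \<ge> 1 - y" and o00: "sc 1 [0,0] = 0"
    and h11: "\<And>y. y \<in> {0..1} \<Longrightarrow> sc y [1,1] \<ge> y" and o11: "sc 0 [1,1] = 0"
    and hA: "\<And>y. y \<in> {0..1} \<Longrightarrow> sc y [0,5/8] \<ge> 1 - \<bar>5/8 - y\<bar> \<and> sc y [0,5/8] \<ge> c * ((1 - y) + (1 - \<bar>5/8 - y\<bar>))"
    and oA: "sc 1 [0,5/8] = 5/8"
    and hC: "\<And>y. y \<in> {0..1} \<Longrightarrow> sc y [3/8,1] \<ge> 1 - \<bar>3/8 - y\<bar> \<and> sc y [3/8,1] \<ge> c * ((1 - \<bar>3/8 - y\<bar>) + y)"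
    and oC: "sc 0 [3/8,1] = 5/8"
  shows "\<rho> \<ge> (11*c + 15)/20"
proof -
  note m00 = mech[OF rm, of "[0,0]"] and m11 = mech[OF rm, of "[1,1]"]
    and mA = mech[OF rm, of "[0,5/8]"] and mC = mech[OF rm, of "[3/8,1]"]
    and mP = mech[OF rm, of "[3/8,5/8]"]
  have m00': "prob_space (f [0,0])" "sets (f [0,0]) = sets (restrict_space borel {0..1::real})"
    using m00 by auto
  have m11': "prob_space (f [1,1])" "sets (f [1,1]) = sets (restrict_space borel {0..1::real})"
    using m11 by auto
  have mA': "prob_space (f [0,5/8])" "sets (f [0,5/8]) = sets (restrict_space borel {0..1::real})"
    using mA by auto
  have mC': "prob_space (f [3/8,1])" "sets (f [3/8,1]) = sets (restrict_space borel {0..1::real})"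
    using mC by auto
  have mP': "prob_space (f [3/8,5/8])" "sets (f [3/8,5/8]) = sets (restrict_space borel {0..1::real})"
    using mP by auto
  have ap': "\<And>xs. xs \<noteq> [] \<Longrightarrow> set xs \<subseteq> {0..1} \<Longrightarrow> (\<integral>y. sc y xs \<partial>f xs) \<le> \<rho> * (INF z\<in>{0..1}. sc z xs)"
    using ap unfolding approx_within_def by blast
  have IA: "\<And>L x. set L \<subseteq> {0..1} \<Longrightarrow> x \<in> {0..1} \<Longrightarrow> integrable (f L) (\<lambda>y. \<bar>x - y\<bar>)"
    using int_abs mech[OF rm] by blast
  have ia00: "integrable (f [0,0]) (\<lambda>y. \<bar>5/8 - y\<bar>)" by (rule IA) auto
  have ia11: "integrable (f [1,1]) (\<lambda>y. \<bar>3/8 - y\<bar>)" by (rule IA) auto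
  have iaA3: "integrable (f [0,5/8]) (\<lambda>y. \<bar>3/8 - y\<bar>)" by (rule IA) auto
  have iaA5: "integrable (f [0,5/8]) (\<lambda>y. \<bar>5/8 - y\<bar>)" by (rule IA) auto
  have iaC3: "integrable (f [3/8,1]) (\<lambda>y. \<bar>3/8 - y\<bar>)" by (rule IA) auto
  have iaC5: "integrable (f [3/8,1]) (\<lambda>y. \<bar>5/8 - y\<bar>)" by (rule IA) auto
  have iaP3: "integrable (f [3/8,5/8]) (\<lambda>y. \<bar>3/8 - y\<bar>)" by (rule IA) auto
  have iaP5: "integrable (f [3/8,5/8]) (\<lambda>y. \<bar>5/8 - y\<bar>)" by (rule IA) auto
  define \<mu> where "\<mu> = (11*c - 5)/4"
  have mu0: "\<mu> \<ge> 0" using c unfolding \<mu>_def by simp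
  have zero: "\<And>M::real measure. integrable M (\<lambda>y. 0::real)" by simp
  have INF00: "(INF z\<in>{0..1}. sc z [0,0]) = 0"
  proof -
    have nn: "\<And>z. z \<in> {0..1} \<Longrightarrow> 0 \<le> sc z [0,0]" using h00 by force
    show ?thesis using INF_facts[where g="\<lambda>z. sc z [0,0]" and w=1, OF nn] o00 by simp
  qed
  have r00: "(\<integral>y. sc y [0,0] \<partial>f [0,0]) \<le> 0" using ap'[of "[0,0]"] INF00 by simp
  have "3/8 \<le> (\<integral>y. sc y [0,0] \<partial>f [0,0]) + 1 * (\<integral>y. \<bar>5/8 - y\<bar> \<partial>f [0,0]) + 0 * (\<integral>y. 0 \<partial>f [0,0])"
    by (rule int_comb[OF m00' i00 ia00 zero]) (frule h00, auto simp: abs_if)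
  then have d00: "(\<integral>y. \<bar>5/8 - y\<bar> \<partial>f [0,0]) \<ge> 3/8" using r00 by simp
  have INF11: "(INF z\<in>{0..1}. sc z [1,1]) = 0"
  proof -
    have nn: "\<And>z. z \<in> {0..1} \<Longrightarrow> 0 \<le> sc z [1,1]" using h11 by force
    show ?thesis using INF_facts[where g="\<lambda>z. sc z [1,1]" and w=0, OF nn] o11 by simp
  qed
  have r11: "(\<integral>y. sc y [1,1] \<partial>f [1,1]) \<le> 0" using ap'[of "[1,1]"] INF11 by simp
  have "3/8 \<le> (\<integral>y. sc y [1,1] \<partial>f [1,1]) + 1 * (\<integral>y. \<bar>3/8 - y\<bar> \<partial>f [1,1]) + 0 * (\<integral>y. 0 \<partial>f [1,1])"
    by (rule int_comb[OF m11' i11 ia11 zero]) (frule h11, auto simp: abs_if)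
  then have d11: "(\<integral>y. \<bar>3/8 - y\<bar> \<partial>f [1,1]) \<ge> 3/8" using r11 by simp
  have spA: "(\<integral>y. \<bar>5/8 - y\<bar> \<partial>f [0,0]) \<le> (\<integral>y. \<bar>5/8 - y\<bar> \<partial>f [0,5/8])"
    using sp_inst[OF rm sp, of "[0,5/8]" 1 0] by simp
  have spC: "(\<integral>y. \<bar>3/8 - y\<bar> \<partial>f [1,1]) \<le> (\<integral>y. \<bar>3/8 - y\<bar> \<partial>f [3/8,1])"
    using sp_inst[OF rm sp, of "[3/8,1]" 0 1] by simp
  have spP1: "(\<integral>y. \<bar>3/8 - y\<bar> \<partial>f [0,5/8]) \<le> (\<integral>y. \<bar>3/8 - y\<bar> \<partial>f [3/8,5/8])"
    using sp_inst[OF rm sp, of "[3/8,5/8]" 0 0] by simp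
  have spP2: "(\<integral>y. \<bar>5/8 - y\<bar> \<partial>f [3/8,1]) \<le> (\<integral>y. \<bar>5/8 - y\<bar> \<partial>f [3/8,5/8])"
    using sp_inst[OF rm sp, of "[3/8,5/8]" 1 1] by simp
  have dP: "(\<integral>y. \<bar>3/8 - y\<bar> \<partial>f [3/8,5/8]) + 1 * (\<integral>y. \<bar>5/8 - y\<bar> \<partial>f [3/8,5/8]) + 0 * (\<integral>y. 0 \<partial>f [3/8,5/8]) \<le> 1"
    by (rule int_comb_up[OF mP' iaP3 iaP5 zero]) auto
  have cA: "5/8 + \<mu>/4 \<le> (\<integral>y. sc y [0,5/8] \<partial>f [0,5/8]) + \<mu> * (\<integral>y. \<bar>3/8 - y\<bar> \<partial>f [0,5/8]) + (-\<mu>) * (\<integral>y. \<bar>5/8 - y\<bar> \<partial>f [0,5/8])"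
  proof (rule int_comb[OF mA' iA iaA3 iaA5])
    fix y :: real assume y: "y \<in> {0..1}"
    note h = conjunct1[OF hA[OF y]] conjunct2[OF hA[OF y]]
    show "5/8 + \<mu>/4 \<le> sc y [0,5/8] + \<mu> * \<bar>3/8 - y\<bar> + (-\<mu>) * \<bar>5/8 - y\<bar>"
    proof (cases "y \<le> 3/8")
      case True
      then have "\<mu> * \<bar>3/8 - y\<bar> + (-\<mu>) * \<bar>5/8 - y\<bar> = - \<mu> / 4" by (simp add: algebra_simps)
      moreover have "c * ((1 - y) + (1 - \<bar>5/8 - y\<bar>)) = 11 * c / 8" using True by simp
      ultimately have "11*c/8 \<le> sc y [0,5/8]" using h by linarith
      then have "5/8 + \<mu>/2 \<le> sc y [0,5/8]" unfolding \<mu>_def by (simp add: field_simps)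
      then show ?thesis using \<open>_ = - \<mu> / 4\<close> by linarith
    next
      case False
      show ?thesis
      proof (cases "y \<le> 5/8")
        case True
        then have e: "\<mu> * \<bar>3/8 - y\<bar> + (-\<mu>) * \<bar>5/8 - y\<bar> = \<mu> * (2*y - 1)" using False by (simp add: algebra_simps)
        have e2: "c * ((1 - y) + (1 - \<bar>5/8 - y\<bar>)) = 11 * c / 8" using True by simp
        have "\<mu> * (2*y - 3/4) \<ge> 0" using mu0 False by simp
        moreover have "11*c/8 \<le> sc y [0,5/8]" using h e2 by linarith
        moreover have "5/8 + \<mu>/2 \<le> sc y [0,5/8]" using calculation(2) unfolding \<mu>_def by (simp add: field_simps)
        ultimately show ?thesis using e by (simp add: algebra_simps)
      next
        case False2: False
        then have e: "\<mu> * \<bar>3/8 - y\<bar> + (-\<mu>) * \<bar>5/8 - y\<bar> = \<mu> / 4" by (simp add: algebra_simps)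
        have "sc y [0,5/8] \<ge> 5/8" using h y False2 by auto
        then show ?thesis using e by linarith
      qed
    qed
  qed
  have cC: "5/8 + \<mu>/4 \<le> (\<integral>y. sc y [3/8,1] \<partial>f [3/8,1]) + \<mu> * (\<integral>y. \<bar>5/8 - y\<bar> \<partial>f [3/8,1]) + (-\<mu>) * (\<integral>y. \<bar>3/8 - y\<bar> \<partial>f [3/8,1])"
  proof (rule int_comb[OF mC' iC iaC5 iaC3])
    fix y :: real assume y: "y \<in> {0..1}"
    note h = conjunct1[OF hC[OF y]] conjunct2[OF hC[OF y]]
    show "5/8 + \<mu>/4 \<le> sc y [3/8,1] + \<mu> * \<bar>5/8 - y\<bar> + (-\<mu>) * \<bar>3/8 - y\<bar>"
    proof (cases "y \<ge> 5/8")
      case True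
      then have "\<mu> * \<bar>5/8 - y\<bar> + (-\<mu>) * \<bar>3/8 - y\<bar> = - \<mu> / 4" by (simp add: algebra_simps)
      moreover have "c * ((1 - \<bar>3/8 - y\<bar>) + y) = 11 * c / 8" using True by simp
      ultimately have "11*c/8 \<le> sc y [3/8,1]" using h by linarith
      then have "5/8 + \<mu>/2 \<le> sc y [3/8,1]" unfolding \<mu>_def by (simp add: field_simps)
      then show ?thesis using \<open>_ = - \<mu> / 4\<close> by linarith
    next
      case False
      show ?thesis
      proof (cases "y \<ge> 3/8")
        case True
        then have e: "\<mu> * \<bar>5/8 - y\<bar> + (-\<mu>) * \<bar>3/8 - y\<bar> = \<mu> * (1 - 2*y)" using False by (simp add: algebra_simps)
        have e2: "c * ((1 - \<bar>3/8 - y\<bar>) + y) = 11 * c / 8" using True by simp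
        have "\<mu> * (5/4 - 2*y) \<ge> 0" using mu0 False by simp
        moreover have "11*c/8 \<le> sc y [3/8,1]" using h e2 by linarith
        moreover have "5/8 + \<mu>/2 \<le> sc y [3/8,1]" using calculation(2) unfolding \<mu>_def by (simp add: field_simps)
        ultimately show ?thesis using e by (simp add: algebra_simps)
      next
        case False2: False
        then have e: "\<mu> * \<bar>5/8 - y\<bar> + (-\<mu>) * \<bar>3/8 - y\<bar> = \<mu> / 4" by (simp add: algebra_simps)
        have "sc y [3/8,1] \<ge> 5/8" using h y False2 by auto
        then show ?thesis using e by linarith
      qed
    qed
  qed
  have nnA: "\<And>z. z \<in> {0..1} \<Longrightarrow> 0 \<le> sc z [0,5/8]" using hA by force
  have nnC: "\<And>z. z \<in> {0..1} \<Longrightarrow> 0 \<le> sc z [3/8,1]" using hC by force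
  have rA: "(\<integral>y. sc y [0,5/8] \<partial>f [0,5/8]) \<le> \<rho> * (INF z\<in>{0..1}. sc z [0,5/8])"
    using ap'[of "[0,5/8]"] by simp
  have rC: "(\<integral>y. sc y [3/8,1] \<partial>f [3/8,1]) \<le> \<rho> * (INF z\<in>{0..1}. sc z [3/8,1])"
    using ap'[of "[3/8,1]"] by simp
  have posA: "3/8 \<le> (\<integral>y. sc y [0,5/8] \<partial>f [0,5/8]) + 0 * (\<integral>y. 0 \<partial>f [0,5/8]) + 0 * (\<integral>y. 0 \<partial>f [0,5/8])"
    by (rule int_comb[OF mA' iA zero zero]) (frule hA, auto simp: abs_if split: if_split_asm)
  have rho0: "\<rho> \<ge> 0"
  proof (rule ccontr)
    assume "\<not> \<rho> \<ge> 0"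
    then have "\<rho> * (INF z\<in>{0..1}. sc z [0,5/8]) \<le> 0"
      using INF_facts(2)[where g="\<lambda>z. sc z [0,5/8]" and w=0, OF nnA] by (simp add: mult_nonpos_nonneg)
    then show False using rA posA by simp
  qed
  have rA': "(\<integral>y. sc y [0,5/8] \<partial>f [0,5/8]) \<le> \<rho> * (5/8)"
    using rA mult_left_mono[OF INF_facts(1)[where g="\<lambda>z. sc z [0,5/8]" and w=1, OF nnA] rho0] oA by simp
  have rC': "(\<integral>y. sc y [3/8,1] \<partial>f [3/8,1]) \<le> \<rho> * (5/8)"
    using rC mult_left_mono[OF INF_facts(1)[where g="\<lambda>z. sc z [3/8,1]" and w=0, OF nnC] rho0] oC by simp
  have k1: "\<mu> * (\<integral>y. \<bar>3/8 - y\<bar> \<partial>f [0,5/8]) \<le> \<mu> * (\<integral>y. \<bar>3/8 - y\<bar> \<partial>f [3/8,5/8])"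
    using mult_left_mono[OF spP1 mu0] .
  have k2: "\<mu> * (\<integral>y. \<bar>5/8 - y\<bar> \<partial>f [3/8,1]) \<le> \<mu> * (\<integral>y. \<bar>5/8 - y\<bar> \<partial>f [3/8,5/8])"
    using mult_left_mono[OF spP2 mu0] .
  have k3: "\<mu> * ((\<integral>y. \<bar>3/8 - y\<bar> \<partial>f [3/8,5/8]) + (\<integral>y. \<bar>5/8 - y\<bar> \<partial>f [3/8,5/8])) \<le> \<mu> * 1"
  proof -
    have "(\<integral>y. \<bar>3/8 - y\<bar> \<partial>f [3/8,5/8]) + (\<integral>y. \<bar>5/8 - y\<bar> \<partial>f [3/8,5/8]) \<le> 1" using dP by simp
    then show ?thesis by (rule mult_left_mono[OF _ mu0])
  qed
  have k4: "\<mu> * (3/8) \<le> \<mu> * (\<integral>y. \<bar>5/8 - y\<bar> \<partial>f [0,5/8])"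
  proof -
    have "3/8 \<le> (\<integral>y. \<bar>5/8 - y\<bar> \<partial>f [0,5/8])" using d00 spA by linarith
    then show ?thesis by (rule mult_left_mono[OF _ mu0])
  qed
  have k5: "\<mu> * (3/8) \<le> \<mu> * (\<integral>y. \<bar>3/8 - y\<bar> \<partial>f [3/8,1])"
  proof -
    have "3/8 \<le> (\<integral>y. \<bar>3/8 - y\<bar> \<partial>f [3/8,1])" using d11 spC by linarith
    then show ?thesis by (rule mult_left_mono[OF _ mu0])
  qed
  have "5/4 + \<mu>/2 \<le> \<rho> * (5/4) + \<mu> * 1 - \<mu> * (3/4)"
    using cA cC rA' rC' k1 k2 k3 k4 k5 by (simp add: algebra_simps)
  then have "5/4 + \<mu>/4 \<le> \<rho> * (5/4)" by linarith
  then show ?thesis unfolding \<mu>_def by (simp add: field_simps)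
qed

lemma scp2: "sc_p p y [a,b] = ((1 - \<bar>a-y\<bar>) powr p + (1 - \<bar>b-y\<bar>) powr p) powr (1/p)"
  by (simp add: sc_p_def)

lemma scinf2: "sc_inf y [a,b] = max (1 - \<bar>a-y\<bar>) (1 - \<bar>b-y\<bar>)"
  by (simp add: sc_inf_def)

lemma pm_ge:
  fixes u v p :: real
  assumes "0 \<le> u" "0 \<le> v" "1 \<le> p"
  shows "v \<le> (u powr p + v powr p) powr (1/p)" "u \<le> (u powr p + v powr p) powr (1/p)"
proof -
  have "p > 0" using assms by linarith
  then have p0: "p \<noteq> 0" by simp
  have "v = (v powr p) powr (1/p)" using assms p0 by (simp add: powr_powr)
  also have "\<dots> \<le> (u powr p + v powr p) powr (1/p)"
    using assms by (intro powr_mono2) auto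
  finally show "v \<le> (u powr p + v powr p) powr (1/p)" .
  have "u = (u powr p) powr (1/p)" using assms p0 by (simp add: powr_powr)
  also have "\<dots> \<le> (u powr p + v powr p) powr (1/p)"
    using assms by (intro powr_mono2) auto
  finally show "u \<le> (u powr p + v powr p) powr (1/p)" .
qed

lemma pm_mean:
  fixes u v p :: real
  assumes u: "0 \<le> u" and v: "0 \<le> v" and p: "1 \<le> p"
  shows "(2 powr (1/p) / 2) * (u + v) \<le> (u powr p + v powr p) powr (1/p)"
proof -
  have "p > 0" using p by linarith
  then have p0: "p \<noteq> 0" by simp
  have two: "2 \<le> (2::real) powr p"
  proof -
    have "(2::real) powr 1 \<le> 2 powr p" using p by (intro powr_mono) auto
    then show ?thesis by simp
  qed
  have conv: "((u+v)/2) powr p \<le> (u powr p + v powr p)/2"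
  proof (cases "u > 0 \<and> v > 0")
    case True
    have c1: "((1 - 1/2) *\<^sub>R u + (1/2) *\<^sub>R v) powr p \<le> (1 - 1/2) * u powr p + (1/2) * v powr p"
      using True by (intro convex_onD[OF powr_convex[OF p]]) auto
    have eq1: "(1 - 1/2) *\<^sub>R u + (1/2) *\<^sub>R v = (u+v)/(2::real)" by simp
    have eq2: "(1 - 1/2) * u powr p + (1/2) * v powr p = (u powr p + v powr p)/2" by simp
    show ?thesis using c1 unfolding eq1 eq2 .
  next
    case False
    then have uv: "u = 0 \<or> v = 0" using u v by auto
    show ?thesis
    proof (cases "u = 0")
      case True
      have "(v/2) powr p = v powr p / 2 powr p" by (rule powr_divide)
      also have "\<dots> \<le> v powr p / 2" using two by (intro divide_left_mono) auto
      finally show ?thesis using True by simp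
    next
      case False
      then have v0: "v = 0" using uv by auto
      have "(u/2) powr p = u powr p / 2 powr p" by (rule powr_divide)
      also have "\<dots> \<le> u powr p / 2" using two by (intro divide_left_mono) auto
      finally show ?thesis using v0 by simp
    qed
  qed
  have "(u+v)/2 = (((u+v)/2) powr p) powr (1/p)" using u v p0 by (simp add: powr_powr)
  also have "\<dots> \<le> ((u powr p + v powr p)/2) powr (1/p)"
    using conv u v p by (intro powr_mono2) auto
  also have "\<dots> = (u powr p + v powr p) powr (1/p) / 2 powr (1/p)"
    by (rule powr_divide)
  finally have h: "(u+v)/2 \<le> (u powr p + v powr p) powr (1/p) / 2 powr (1/p)" .
  have pos: "0 < (2::real) powr (1/p)" by simp
  have "(u+v)/2 * 2 powr (1/p) \<le> (u powr p + v powr p) powr (1/p)"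
    using h pos by (simp add: pos_le_divide_eq)
  moreover have "(2 powr (1/p) / 2) * (u + v) = (u+v)/2 * 2 powr (1/p)" by simp
  ultimately show ?thesis by (simp add: mult.commute)
qed

lemma ln2_ge: "13/20 \<le> ln (2::real)"
proof -
  have e1: "1 + (-(13/120)) \<le> exp (-(13/120::real))" by (rule exp_ge_add_one_self)
  have e2: "exp (13/120::real) = 1 / exp (-(13/120))" by (simp add: exp_minus field_simps)
  have e3: "exp (13/120::real) \<le> 120/107"
    using e1 unfolding e2 by (simp add: field_simps)
  have "exp (13/20::real) = exp (real 6 * (13/120))" by simp
  also have "\<dots> = exp (13/120) ^ 6" by (rule exp_of_nat_mult)
  also have "\<dots> \<le> (120/107) ^ 6" by (rule power_mono[OF e3]) simp
  also have "\<dots> \<le> 2" by (simp add: power_divide)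
  finally have "exp (13/20::real) \<le> 2" .
  then have "ln (exp (13/20::real)) \<le> ln 2" by (subst ln_le_cancel_iff) auto
  then show ?thesis by simp
qed

lemma final_ineq:
  assumes p: "1 \<le> p"
  shows "(5/4) powr (1/p) \<le> (11 * (2 powr (1/p) / 2) + 15) / (20::real)"
proof -
  define s where "s = 1/p"
  have s0: "0 < s" and s1: "s \<le> 1" using p unfolding s_def by auto
  have A: "(5/4::real) powr s \<le> 1 + s/4"
  proof -
    have "exp ((1 - s) *\<^sub>R 0 + s *\<^sub>R ln (5/4::real)) \<le> (1 - s) * exp 0 + s * exp (ln (5/4))"
      using s0 s1 by (intro convex_onD[OF exp_convex]) auto
    then show ?thesis by (simp add: powr_def algebra_simps)
  qed
  have L: "13/20 \<le> ln (2::real)" by (rule ln2_ge)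
  have t0: "0 \<le> s * ln 2" using s0 by simp
  have B: "1 + s * ln 2 + (s * ln 2)^2/2 \<le> (2::real) powr s"
    using exp_lower_Taylor_quadratic[OF t0] by (simp add: powr_def mult.commute)
  have t1: "13/20 * s \<le> s * ln 2" using L s0 by (simp add: mult.commute mult_right_mono)
  have t2: "(13/20 * s)^2 \<le> (s * ln 2)^2" using t1 s0 by (intro power_mono) auto
  have sq: "0 \<le> (s - 3/5)^2" by simp
  have sq': "(s - 3/5)^2 = s^2 - 6/5 * s + 9/25" by (simp add: power2_eq_square algebra_simps)
  have sq2: "(13/20 * s)^2 = 169/400 * s^2" by (simp add: power2_eq_square)
  have "1 + s/4 \<le> 11/40 * (2::real) powr s + 3/4"
    using B t1 t2 sq sq' sq2 s1 s0 by linarith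
  then have "(5/4::real) powr s \<le> 11/40 * (2::real) powr s + 3/4" using A by linarith
  then show ?thesis unfolding s_def by (simp add: field_simps)
qed

lemma scp_bound:
  fixes p a b y :: real
  assumes "1 \<le> p" "a \<in> {0..1}" "b \<in> {0..1}" "y \<in> {0..1}"
  shows "\<bar>sc_p p y [a,b]\<bar> \<le> 2"
proof -
  let ?u = "1 - \<bar>a - y\<bar>" and ?v = "1 - \<bar>b - y\<bar>"
  have u: "?u powr p \<le> 1" using assms by (intro powr_le1) auto
  have v: "?v powr p \<le> 1" using assms by (intro powr_le1) auto
  have "(?u powr p + ?v powr p) powr (1/p) \<le> 2 powr (1/p)"
    using u v assms by (intro powr_mono2) auto
  also have "\<dots> \<le> 2 powr 1" using assms by (intro powr_mono) auto
  finally show ?thesis unfolding scp2 by simp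
qed

lemma scp_int:
  fixes p a b :: real
  assumes rm: "rand_mechanism f" and "1 \<le> p" "a \<in> {0..1}" "b \<in> {0..1}"
  shows "integrable (f [a,b]) (\<lambda>y. sc_p p y [a,b])"
proof -
  have L: "set [a,b] \<subseteq> {0..1}" using assms by auto
  show ?thesis
  proof (rule int_bounded[OF mech[OF rm L], where B=2])
    show "(\<lambda>y. sc_p p y [a, b]) \<in> borel_measurable borel"
      unfolding scp2 by measurable
    show "\<And>y. y \<in> {0..1} \<Longrightarrow> \<bar>sc_p p y [a, b]\<bar> \<le> 2" using scp_bound assms by blast
  qed
qed

lemma scinf_int:
  fixes a b :: real
  assumes rm: "rand_mechanism f" and "a \<in> {0..1}" "b \<in> {0..1}"
  shows "integrable (f [a,b]) (\<lambda>y. sc_inf y [a,b])"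
proof -
  have L: "set [a,b] \<subseteq> {0..1}" using assms by auto
  show ?thesis
  proof (rule int_bounded[OF mech[OF rm L], where B=1])
    show "(\<lambda>y. sc_inf y [a, b]) \<in> borel_measurable borel"
      unfolding scinf2 by measurable
    show "\<And>y. y \<in> {0..1} \<Longrightarrow> \<bar>sc_inf y [a, b]\<bar> \<le> 1" using assms unfolding scinf2 by auto
  qed
qed

lemma Lp_bound:
  fixes f :: "real list \<Rightarrow> real measure" and p \<rho> :: real
  assumes rm: "rand_mechanism f" and sp: "strategyproof f" and p: "1 \<le> p"
    and ap: "approx_within (sc_p p) f \<rho>"
  shows "(5/4) powr (1/p) \<le> \<rho>"
proof -
  define c where "c = 2 powr (1/p) / (2::real)"
  have p0: "p > 0" using p by linarith
  have c1: "1 \<le> (2::real) powr (1/p)" using p0 by (intro ge_one_powr_ge_zero) auto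
  have c: "c \<ge> 5/11" using c1 unfolding c_def by simp
  have pm: "\<And>u v. 0 \<le> u \<Longrightarrow> 0 \<le> v \<Longrightarrow> c * (u + v) \<le> (u powr p + v powr p) powr (1/p)"
    using pm_mean[OF _ _ p] unfolding c_def by blast
  have pg: "\<And>u v. 0 \<le> u \<Longrightarrow> 0 \<le> v \<Longrightarrow> v \<le> (u powr p + v powr p) powr (1/p)"
    using pm_ge(1)[OF _ _ p] by blast
  have "\<rho> \<ge> (11*c + 15)/20"
  proof (rule core[OF rm sp ap c])
    show "integrable (f [0,0]) (\<lambda>y. sc_p p y [0,0])" by (rule scp_int[OF rm p]) auto
    show "integrable (f [1,1]) (\<lambda>y. sc_p p y [1,1])" by (rule scp_int[OF rm p]) auto
    show "integrable (f [0,5/8]) (\<lambda>y. sc_p p y [0,5/8])" by (rule scp_int[OF rm p]) auto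
    show "integrable (f [3/8,1]) (\<lambda>y. sc_p p y [3/8,1])" by (rule scp_int[OF rm p]) auto
    show "\<And>y. y \<in> {0..1} \<Longrightarrow> sc_p p y [0,0] \<ge> 1 - y"
    proof -
      fix y :: real assume y: "y \<in> {0..1}"
      have "1 - \<bar>0 - y\<bar> \<le> sc_p p y [0,0]" unfolding scp2 using y by (intro pg) auto
      then show "sc_p p y [0,0] \<ge> 1 - y" using y by simp
    qed
    show "sc_p p 1 [0,0] = 0" using p0 unfolding scp2 by simp
    show "\<And>y. y \<in> {0..1} \<Longrightarrow> sc_p p y [1,1] \<ge> y"
    proof -
      fix y :: real assume y: "y \<in> {0..1}"
      have "1 - \<bar>1 - y\<bar> \<le> sc_p p y [1,1]" unfolding scp2 using y by (intro pg) auto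
      then show "sc_p p y [1,1] \<ge> y" using y by simp
    qed
    show "sc_p p 0 [1,1] = 0" using p0 unfolding scp2 by simp
    show "\<And>y. y \<in> {0..1} \<Longrightarrow> sc_p p y [0,5/8] \<ge> 1 - \<bar>5/8 - y\<bar> \<and> sc_p p y [0,5/8] \<ge> c * ((1 - y) + (1 - \<bar>5/8 - y\<bar>))"
    proof -
      fix y :: real assume y: "y \<in> {0..1}"
      have "1 - \<bar>5/8 - y\<bar> \<le> sc_p p y [0,5/8]" unfolding scp2 using y by (intro pg) auto
      moreover have "c * ((1 - \<bar>0 - y\<bar>) + (1 - \<bar>5/8 - y\<bar>)) \<le> sc_p p y [0,5/8]" unfolding scp2 using y by (intro pm) auto
      ultimately show "sc_p p y [0,5/8] \<ge> 1 - \<bar>5/8 - y\<bar> \<and> sc_p p y [0,5/8] \<ge> c * ((1 - y) + (1 - \<bar>5/8 - y\<bar>))"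
        using y by simp
    qed
    show "sc_p p 1 [0,5/8] = 5/8" using p0 unfolding scp2 by (simp add: powr_powr)
    show "\<And>y. y \<in> {0..1} \<Longrightarrow> sc_p p y [3/8,1] \<ge> 1 - \<bar>3/8 - y\<bar> \<and> sc_p p y [3/8,1] \<ge> c * ((1 - \<bar>3/8 - y\<bar>) + y)"
    proof -
      fix y :: real assume y: "y \<in> {0..1}"
      have "1 - \<bar>3/8 - y\<bar> \<le> sc_p p y [3/8,1]"
        using y pm_ge(2)[OF _ _ p, of "1 - \<bar>3/8 - y\<bar>" "1 - \<bar>1 - y\<bar>"] unfolding scp2 by auto
      moreover have "c * ((1 - \<bar>3/8 - y\<bar>) + (1 - \<bar>1 - y\<bar>)) \<le> sc_p p y [3/8,1]" unfolding scp2 using y by (intro pm) auto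
      moreover have "1 - \<bar>1 - y\<bar> = y" using y by simp
      ultimately show "sc_p p y [3/8,1] \<ge> 1 - \<bar>3/8 - y\<bar> \<and> sc_p p y [3/8,1] \<ge> c * ((1 - \<bar>3/8 - y\<bar>) + y)"
        using y by simp
    qed
    show "sc_p p 0 [3/8,1] = 5/8" using p0 unfolding scp2 by (simp add: powr_powr)
  qed
  moreover have "(5/4) powr (1/p) \<le> (11 * c + 15) / 20" using final_ineq[OF p] unfolding c_def .
  ultimately show ?thesis by linarith
qed

lemma Linf_bound:
  fixes f :: "real list \<Rightarrow> real measure" and \<rho> :: real
  assumes rm: "rand_mechanism f" and sp: "strategyproof f"
    and ap: "approx_within sc_inf f \<rho>"
  shows "1.008 \<le> \<rho>"
proof -
  have "\<rho> \<ge> (11*(1/2) + 15)/20"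
  proof (rule core[OF rm sp ap])
    show "integrable (f [0,0]) (\<lambda>y. sc_inf y [0,0])" by (rule scinf_int[OF rm]) auto
    show "integrable (f [1,1]) (\<lambda>y. sc_inf y [1,1])" by (rule scinf_int[OF rm]) auto
    show "integrable (f [0,5/8]) (\<lambda>y. sc_inf y [0,5/8])" by (rule scinf_int[OF rm]) auto
    show "integrable (f [3/8,1]) (\<lambda>y. sc_inf y [3/8,1])" by (rule scinf_int[OF rm]) auto
  qed (auto simp: scinf2 max_def)
  then show ?thesis by simp
qed

theorem theorem13:
  fixes f :: "real list \<Rightarrow> real measure"
  assumes "rand_mechanism f" and "strategyproof f"
  shows "(\<forall>p::real. \<forall>\<rho>::real. 1 \<le> p \<longrightarrow> approx_within (sc_p p) f \<rho> \<longrightarrow>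
            (5/4) powr (1/p) \<le> \<rho>)
       \<and> (\<forall>\<rho>::real. approx_within sc_inf f \<rho> \<longrightarrow> 1.008 \<le> \<rho>)"
  using Lp_bound[OF assms] Linf_bound[OF assms] by blast

end
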